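(* Let $A\in\mathbb{R}^{n\times d}$, $k\ge1$, and let $B\in\mathbb{R}^{n\times m}$ satisfy $$BB^T\preceq AA^T\preceq BB^T+\tfrac12\cdot\tfrac{\|A-A_k\|_F^2}{k}I_n .$$ For each column $a_i$ of $A$ define $\tilde\tau_i=a_i^T\Big(BB^T+\frac{\|A\|_F^2-\|B_k\|_F^2}{k}I_n\Big)^+a_i$. Then for all $i$, $$\tfrac12\bar\tau_i(A)\le\tilde\tau_i\le2\bar\tau_i(A).$$
   Context: For any matrix $N$, $N_k$ denotes a best rank-$k$ approximation in Frobenius norm, so $\|N_k\|_F^2$ is the sum of the $k$ largest squared singular values of $N$. $^+$ is the Moore–Penrose pseudoinverse and $\preceq$ the Loewner order. Ridge leverage score: $\bar\tau_i(A)=a_i^T\big(AA^T+\frac{\|A-A_k\|_F^2}{k}I_n\big)^+a_i$. *)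

theory Defs
  imports "HOL-Analysis.Analysis"
begin

text \<open>Matrices are rendered as real^'c^'r (rows indexed by 'r, columns by 'c).\<close>

definition frob_sq :: "real^'c^'r \<Rightarrow> real" where
  "frob_sq N = (\<Sum>i\<in>UNIV. \<Sum>j\<in>UNIV. (N $ i $ j)^2)"

definition is_best_rank_approx :: "nat \<Rightarrow> real^'c^'r \<Rightarrow> real^'c^'r \<Rightarrow> bool" where
  "is_best_rank_approx k N M \<longleftrightarrow> rank M \<le> k \<and>
     (\<forall>M'. rank M' \<le> k \<longrightarrow> frob_sq (N - M) \<le> frob_sq (N - M'))"

definition best_rank :: "nat \<Rightarrow> real^'c^'r \<Rightarrow> real^'c^'r" where
  "best_rank k N = (SOME M. is_best_rank_approx k N M)"

definition pinv :: "real^'c^'r \<Rightarrow> real^'r^'c" where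
  "pinv A = (THE X. A ** X ** A = A \<and> X ** A ** X = X \<and>
                    transpose (A ** X) = A ** X \<and> transpose (X ** A) = X ** A)"

definition loewner_le :: "real^'n^'n \<Rightarrow> real^'n^'n \<Rightarrow> bool" where
  "loewner_le X Y \<longleftrightarrow> (\<forall>x. x \<bullet> (X *v x) \<le> x \<bullet> (Y *v x))"

definition ridge_lev :: "nat \<Rightarrow> real^'d^'n \<Rightarrow> 'd \<Rightarrow> real" where
  "ridge_lev k A i = column i A \<bullet>
     (pinv (A ** transpose A + (frob_sq (A - best_rank k A) / real k) *\<^sub>R mat 1) *v column i A)"

end

theory Submission
  imports Defs
begin
lemma inner_mv_adj: "inner (x::real^'n) (A *v y) = inner (transpose A *v x) y"
  by (simp add: dot_lmul_matrix)

lemma frob_inner: "frob_sq N = inner N N"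
  by (simp add: frob_sq_def inner_vec_def power2_eq_square)

lemma smat_mv: "(c *\<^sub>R mat 1) *v (x::real^'n) = c *\<^sub>R x"
  by (simp add: scaleR_matrix_vector_assoc[symmetric])

lemma sum_swap3: "(\<Sum>i\<in>I. \<Sum>j\<in>J. \<Sum>l\<in>L. f i j l) = (\<Sum>l\<in>L. \<Sum>j\<in>J. \<Sum>i\<in>I. (f i j l::real))"
proof -
  have "(\<Sum>l\<in>L. \<Sum>j\<in>J. \<Sum>i\<in>I. f i j l) = (\<Sum>l\<in>L. \<Sum>i\<in>I. \<Sum>j\<in>J. f i j l)"
    by (rule sum.cong, simp, rule sum.swap)
  also have "\<dots> = (\<Sum>i\<in>I. \<Sum>l\<in>L. \<Sum>j\<in>J. f i j l)" by (rule sum.swap)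
  also have "\<dots> = (\<Sum>i\<in>I. \<Sum>j\<in>J. \<Sum>l\<in>L. f i j l)"
    by (rule sum.cong, simp, rule sum.swap)
  finally show ?thesis by simp
qed

lemma inner_mat_adj:
  fixes P :: "real^'r^'r" and X Y :: "real^'c^'r"
  shows "inner (P ** X) Y = inner X (transpose P ** Y)"
proof -
  have "inner (P ** X) Y = (\<Sum>i\<in>UNIV. \<Sum>j\<in>UNIV. \<Sum>l\<in>UNIV. P$i$l * X$l$j * Y$i$j)"
    by (simp add: inner_vec_def matrix_matrix_mult_def sum_distrib_right)
  also have "\<dots> = (\<Sum>l\<in>UNIV. \<Sum>j\<in>UNIV. \<Sum>i\<in>UNIV. P$i$l * X$l$j * Y$i$j)"
    by (rule sum_swap3)
  also have "\<dots> = inner X (transpose P ** Y)"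
    by (simp add: inner_vec_def matrix_matrix_mult_def transpose_def sum_distrib_left mult.assoc mult.left_commute)
  finally show ?thesis .
qed

lemma quad_id: "inner x ((c *\<^sub>R mat 1) *v (x::real^'n)) = c * inner x x"
  by (simp add: smat_mv)

definition projm :: "(real^'n) set \<Rightarrow> real^'n^'n" where
  "projm S = (\<chi> i j. \<Sum>b\<in>S. b$i * b$j)"

definition onb :: "(real^'n) set \<Rightarrow> bool" where
  "onb S \<longleftrightarrow> finite S \<and> pairwise orthogonal S \<and> (\<forall>b\<in>S. inner b b = 1)"

lemma projm_mv: "projm S *v x = (\<Sum>b\<in>S. (inner b x) *\<^sub>R b)"
proof -
  have "(projm S *v x)$i = (\<Sum>b\<in>S. inner b x * b$i)" for i
  proof -
    have "(projm S *v x)$i = (\<Sum>j\<in>UNIV. \<Sum>b\<in>S. b$i * b$j * x$j)"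
      by (simp add: matrix_vector_mult_def projm_def sum_distrib_right)
    also have "\<dots> = (\<Sum>b\<in>S. \<Sum>j\<in>UNIV. b$i * b$j * x$j)" by (rule sum.swap)
    also have "\<dots> = (\<Sum>b\<in>S. inner b x * b$i)"
      by (simp add: inner_vec_def sum_distrib_left sum_distrib_right mult_ac)
    finally show ?thesis .
  qed
  then show ?thesis by (simp add: vec_eq_iff)
qed

lemma onb_dot:
  assumes "onb S" "c \<in> S"
  shows "(\<Sum>b\<in>S. inner b y * inner c b) = inner c y"
proof -
  have fin: "finite S" using assms by (simp add: onb_def)
  have "(\<Sum>b\<in>S. inner b y * inner c b) = inner c y * inner c c + (\<Sum>b\<in>S-{c}. inner b y * inner c b)"
    using sum.remove[OF fin assms(2)] by simp
  also have "(\<Sum>b\<in>S-{c}. inner b y * inner c b) = 0"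
    using assms by (intro sum.neutral) (auto simp: onb_def pairwise_def orthogonal_def)
  finally show ?thesis using assms by (simp add: onb_def)
qed

lemma projm_span: "projm S *v x \<in> span S"
  unfolding projm_mv by (intro span_sum span_scale span_base)

lemma onb_expand:
  assumes "onb S" "y \<in> span S"
  shows "projm S *v y = y"
proof -
  define z where "z = y - projm S *v y"
  have zs: "z \<in> span S" unfolding z_def using assms(2) projm_span by (intro span_diff) auto
  have "orthogonal z c" if "c \<in> S" for c
  proof -
    have "inner c (projm S *v y) = (\<Sum>b\<in>S. inner b y * inner c b)"
      by (simp add: projm_mv inner_sum_right)
    also have "\<dots> = inner c y" using onb_dot[OF assms(1) that] .
    finally have "inner c z = 0" by (simp add: z_def inner_diff_right)
    then show ?thesis by (simp add: orthogonal_def inner_commute)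
  qed
  then have "orthogonal z z" using orthogonal_to_span[OF zs] by blast
  then have "z = 0" by (simp add: orthogonal_self)
  then show ?thesis by (simp add: z_def)
qed

lemma projm_sym: "transpose (projm S) = projm S"
  by (simp add: transpose_def projm_def vec_eq_iff mult.commute)

lemma projm_idem: "onb S \<Longrightarrow> projm S ** projm S = projm S"
  by (simp add: matrix_eq matrix_vector_mul_assoc[symmetric] onb_expand projm_span)

lemma projm_trace: "onb S \<Longrightarrow> trace (projm S) = real (card S)"
proof -
  assume o: "onb S"
  have "trace (projm S) = (\<Sum>i\<in>UNIV. \<Sum>b\<in>S. b$i * b$i)" by (simp add: trace_def projm_def)
  also have "\<dots> = (\<Sum>b\<in>S. \<Sum>i\<in>UNIV. b$i * b$i)" by (rule sum.swap)
  also have "\<dots> = (\<Sum>b\<in>S. 1)" using o by (intro sum.cong) (auto simp: onb_def inner_vec_def)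
  finally show ?thesis by simp
qed

definition Kset :: "nat \<Rightarrow> (real^'n^'n) set" where
  "Kset k = {P. transpose P = P \<and> P ** P = P \<and> trace P \<le> real k}"

lemma mat_diff_ldistrib: "(A::real^'n^'m) ** (B - C) = A ** B - A ** C"
  by (simp add: matrix_matrix_mult_def vec_eq_iff sum_subtractf right_diff_distrib)

lemma subspace_range_mat: "subspace (range (\<lambda>x. (M::real^'c^'r) *v x))"
  unfolding subspace_def
proof (intro conjI ballI allI)
  show "0 \<in> range (\<lambda>x. M *v x)" by (rule range_eqI[of _ _ 0]) simp
next
  fix x y assume "x \<in> range (\<lambda>x. M *v x)" "y \<in> range (\<lambda>x. M *v x)"
  then obtain u v where "x = M *v u" "y = M *v v" by auto
  then show "x + y \<in> range (\<lambda>x. M *v x)"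
    by (auto intro: range_eqI[of _ _ "u + v"] simp: matrix_vector_right_distrib)
next
  fix c x assume "x \<in> range (\<lambda>x. M *v x)"
  then obtain u where "x = M *v u" by auto
  then show "c *\<^sub>R x \<in> range (\<lambda>x. M *v x)"
    by (auto intro: range_eqI[of _ _ "c *\<^sub>R u"] simp: matrix_vector_mult_scaleR)
qed

lemma onb_of_subspace:
  fixes S :: "(real^'n) set"
  assumes "subspace S"
  obtains Bs where "onb Bs" "span Bs = S" "card Bs = dim S"
proof -
  obtain Bs where "Bs \<subseteq> S" "pairwise orthogonal Bs" "\<And>x. x \<in> Bs \<Longrightarrow> norm x = 1"
    "independent Bs" "card Bs = dim S" "span Bs = S"
    using orthonormal_basis_subspace[OF assms] by metis
  moreover have "finite Bs" using \<open>independent Bs\<close> by (simp add: independent_imp_finite)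
  ultimately have "onb Bs" by (auto simp: onb_def norm_eq_1[symmetric])
  then show ?thesis using that \<open>span Bs = S\<close> \<open>card Bs = dim S\<close> by blast
qed

lemma rank_eq_trace:
  fixes P :: "real^'n^'n"
  assumes sym: "transpose P = P" and idem: "P ** P = P"
  shows "real (rank P) = trace P"
proof -
  obtain Bs where o: "onb Bs" and sp: "span Bs = range (\<lambda>x. P *v x)"
      and c: "card Bs = dim (range (\<lambda>x. P *v x))"
    using onb_of_subspace[OF subspace_range_mat] by metis
  have fixb: "P *v b = b" if "b \<in> Bs" for b
  proof -
    have "b \<in> span Bs" using that by (simp add: span_base)
    then obtain y where "b = P *v y" using sp by auto
    then show ?thesis by (simp add: matrix_vector_mul_assoc idem)
  qed
  have "P *v x = projm Bs *v x" for x
  proof -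
    have "projm Bs *v (P *v x) = P *v x" using o sp by (intro onb_expand) auto
    moreover have "projm Bs *v (P *v x) = projm Bs *v x"
    proof -
      have "inner b (P *v x) = inner b x" if "b \<in> Bs" for b
        using fixb[OF that] by (simp add: inner_mv_adj sym)
      then show ?thesis by (simp add: projm_mv)
    qed
    ultimately show ?thesis by simp
  qed
  then have "P = projm Bs" by (simp add: matrix_eq)
  then have "trace P = real (card Bs)" using projm_trace[OF o] by simp
  then show ?thesis using c by (simp add: rank_dim_range)
qed

lemma proj_for:
  fixes M :: "real^'c^'r"
  assumes "rank M \<le> k"
  shows "\<exists>P\<in>Kset k. P ** M = M"
proof -
  obtain Bs where o: "onb Bs" and sp: "span Bs = range (\<lambda>x. M *v x)"
      and c: "card Bs = dim (range (\<lambda>x. M *v x))"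
    using onb_of_subspace[OF subspace_range_mat] by metis
  have "projm Bs ** M = M"
    unfolding matrix_eq
  proof
    fix x show "(projm Bs ** M) *v x = M *v x"
      using o sp by (simp add: matrix_vector_mul_assoc[symmetric] onb_expand)
  qed
  moreover have "projm Bs \<in> Kset k"
    using o c assms by (simp add: Kset_def projm_sym projm_idem projm_trace rank_dim_range)
  ultimately show ?thesis by blast
qed

lemma frob_proj:
  fixes P :: "real^'n^'n"
  assumes sym: "transpose P = P" and idem: "P ** P = P"
  shows "inner P P = trace P"
proof -
  have "trace P = trace (P ** P)" by (simp add: idem)
  also have "\<dots> = (\<Sum>i\<in>UNIV. \<Sum>j\<in>UNIV. P$i$j * P$j$i)"
    by (simp add: trace_def matrix_matrix_mult_def)
  also have "\<dots> = (\<Sum>i\<in>UNIV. \<Sum>j\<in>UNIV. P$i$j * P$i$j)"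
  proof -
    have "P$j$i = P$i$j" for i j
      using arg_cong[OF sym, of "\<lambda>X. X$i$j"] by (simp add: transpose_def)
    then show ?thesis by simp
  qed
  also have "\<dots> = inner P P" by (simp add: inner_vec_def)
  finally show ?thesis by simp
qed

lemma pyth1:
  fixes P :: "real^'r^'r" and N :: "real^'c^'r"
  assumes sym: "transpose P = P" and idem: "P ** P = P"
  shows "frob_sq (N - P ** N) = frob_sq N - frob_sq (P ** N)"
proof -
  have "inner (P ** N) (P ** N) = inner N (P ** N)"
    by (simp add: inner_mat_adj sym matrix_mul_assoc idem)
  then show ?thesis
    by (simp add: frob_inner inner_diff_left inner_diff_right inner_commute[of "P ** N" N])
qed

lemma pyth2:
  fixes P :: "real^'r^'r" and N M :: "real^'c^'r"
  assumes sym: "transpose P = P" and idem: "P ** P = P" and PM: "P ** M = M"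
  shows "frob_sq (N - M) = frob_sq (N - P ** N) + frob_sq (P ** N - M)"
proof -
  define u where "u = N - P ** N"
  define v where "v = P ** N - M"
  have v': "v = P ** (N - M)" by (simp add: v_def mat_diff_ldistrib PM)
  have "inner v u = inner (N - M) (P ** u)"
    by (simp add: v' inner_mat_adj sym)
  also have "P ** u = 0" by (simp add: u_def mat_diff_ldistrib matrix_mul_assoc idem)
  finally have uv: "inner u v = 0" by (simp add: inner_commute)
  have "N - M = u + v" by (simp add: u_def v_def)
  then have "frob_sq (N - M) = inner u u + 2 * inner u v + inner v v"
    by (simp add: frob_inner inner_add_left inner_add_right inner_commute[of v u])
  then show ?thesis using uv by (simp add: frob_inner u_def v_def)
qed

lemma cont_mm: "continuous_on UNIV (\<lambda>P::real^'n^'n. P ** P)"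
  unfolding matrix_matrix_mult_def by (intro continuous_intros)

lemma cont_tr: "continuous_on UNIV (\<lambda>P::real^'n^'n. transpose P)"
  unfolding transpose_def by (intro continuous_intros)

lemma cont_trace: "continuous_on UNIV (\<lambda>P::real^'n^'n. trace P)"
  unfolding trace_def by (intro continuous_intros)

lemma cont_obj: "continuous_on S (\<lambda>P::real^'r^'r. frob_sq (N - P ** (N::real^'c^'r)))"
  unfolding frob_inner matrix_matrix_mult_def by (intro continuous_intros)

lemma compact_Kset: "compact (Kset k :: (real^'n^'n) set)"
proof -
  have "Kset k = {P::real^'n^'n. transpose P = P} \<inter> {P. P ** P = P} \<inter> {P. trace P \<le> real k}"
    by (auto simp: Kset_def)
  moreover have "closed \<dots>"
    by (intro closed_Int closed_Collect_eq closed_Collect_le cont_mm cont_tr cont_trace continuous_on_id continuous_on_const)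
  moreover have "bounded (Kset k :: (real^'n^'n) set)"
    unfolding bounded_iff
  proof (intro exI ballI)
    fix P :: "real^'n^'n" assume "P \<in> Kset k"
    then have "transpose P = P" "P ** P = P" "trace P \<le> real k" by (auto simp: Kset_def)
    then have "inner P P \<le> real k" using frob_proj[of P] by simp
    then show "norm P \<le> sqrt (real k)" by (simp add: norm_eq_sqrt_inner)
  qed
  ultimately show ?thesis by (simp add: compact_eq_bounded_closed)
qed

lemma zero_Kset: "0 \<in> Kset k"
  by (simp add: Kset_def trace_def transpose_def vec_eq_iff)

lemma rank_Kset:
  fixes N :: "real^'c^'r"
  assumes "P \<in> Kset k" shows "rank (P ** N) \<le> k"
proof -
  have "transpose P = P" "P ** P = P" "trace P \<le> real k" using assms by (auto simp: Kset_def)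
  then have "real (rank P) \<le> real k" using rank_eq_trace[of P] by simp
  then have "rank P \<le> k" by simp
  then show ?thesis using rank_mul_le_left[of P N] by simp
qed

lemma best_ok: "is_best_rank_approx k (N::real^'c^'r) (best_rank k N)"
proof -
  obtain P0 :: "real^'r^'r" where P0: "P0 \<in> Kset k"
      and min: "\<forall>P\<in>Kset k. frob_sq (N - P0 ** N) \<le> frob_sq (N - P ** N)"
    using continuous_attains_inf[OF compact_Kset _ cont_obj, of k N] zero_Kset by blast
  have "is_best_rank_approx k N (P0 ** N)"
    unfolding is_best_rank_approx_def
  proof (intro conjI allI impI)
    show "rank (P0 ** N) \<le> k" using rank_Kset[OF P0] .
  next
    fix M :: "real^'c^'r" assume "rank M \<le> k"
    then obtain P where P: "P \<in> Kset k" "P ** M = M" using proj_for by blast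
    have "frob_sq (N - M) = frob_sq (N - P ** N) + frob_sq (P ** N - M)"
      using P by (intro pyth2) (auto simp: Kset_def)
    moreover have "frob_sq (P ** N - M) \<ge> 0" by (simp add: frob_inner)
    moreover have "frob_sq (N - P0 ** N) \<le> frob_sq (N - P ** N)" using min P by blast
    ultimately show "frob_sq (N - P0 ** N) \<le> frob_sq (N - M)" by linarith
  qed
  then show ?thesis unfolding best_rank_def by (rule someI)
qed

lemma Gchar:
  fixes N :: "real^'c^'r"
  shows "\<exists>P0\<in>Kset k. frob_sq (best_rank k N) = frob_sq (P0 ** N)
      \<and> frob_sq (N - best_rank k N) = frob_sq N - frob_sq (P0 ** N)"
    and "\<forall>P\<in>Kset k. frob_sq (P ** N) \<le> frob_sq N - frob_sq (N - best_rank k N)"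
proof -
  let ?Nk = "best_rank k N"
  have b: "rank ?Nk \<le> k" "\<And>M. rank M \<le> k \<Longrightarrow> frob_sq (N - ?Nk) \<le> frob_sq (N - M)"
    using best_ok[of k N] by (auto simp: is_best_rank_approx_def)
  show "\<forall>P\<in>Kset k. frob_sq (P ** N) \<le> frob_sq N - frob_sq (N - best_rank k N)"
  proof
    fix P :: "real^'r^'r" assume P: "P \<in> Kset k"
    have "frob_sq (N - ?Nk) \<le> frob_sq (N - P ** N)" using b(2)[OF rank_Kset[OF P]] .
    also have "\<dots> = frob_sq N - frob_sq (P ** N)" using P by (intro pyth1) (auto simp: Kset_def)
    finally show "frob_sq (P ** N) \<le> frob_sq N - frob_sq (N - ?Nk)" by linarith
  qed
  obtain P where P: "P \<in> Kset k" "P ** ?Nk = ?Nk" using proj_for[OF b(1)] by blast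
  have sy: "transpose P = P" "P ** P = P" using P by (auto simp: Kset_def)
  have e: "frob_sq (N - ?Nk) = frob_sq (N - P ** N) + frob_sq (P ** N - ?Nk)"
    using sy P by (intro pyth2) auto
  have "frob_sq (N - ?Nk) \<le> frob_sq (N - P ** N)" using b(2)[OF rank_Kset[OF P(1)]] .
  then have le: "inner (P ** N - ?Nk) (P ** N - ?Nk) \<le> 0"
    using e by (simp only: frob_inner)
  have "inner (P ** N - ?Nk) (P ** N - ?Nk) = 0" by (rule antisym[OF le inner_ge_zero])
  then have "P ** N - ?Nk = 0" by (simp only: inner_eq_zero_iff)
  then have eq: "?Nk = P ** N" by simp
  show "\<exists>P0\<in>Kset k. frob_sq (best_rank k N) = frob_sq (P0 ** N)
      \<and> frob_sq (N - best_rank k N) = frob_sq N - frob_sq (P0 ** N)"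
    using P(1) eq pyth1[OF sy, of N] by auto
qed

lemma mat_add_rdistrib: "((A::real^'n^'m) + B) ** C = A ** C + B ** C"
  by (simp add: matrix_matrix_mult_def vec_eq_iff sum.distrib distrib_right)

lemma mat_diff_rdistrib: "((A::real^'n^'m) - B) ** C = A ** C - B ** C"
  by (simp add: matrix_matrix_mult_def vec_eq_iff sum_subtractf left_diff_distrib)

lemma transpose_diff: "transpose ((A::real^'n^'m) - B) = transpose A - transpose B"
  by (simp add: transpose_def vec_eq_iff)

lemma transpose_add: "transpose ((A::real^'n^'m) + B) = transpose A + transpose B"
  by (simp add: transpose_def vec_eq_iff)

lemma quad_gram2: "inner x (((N::real^'m^'n) ** transpose N) *v x) = inner (x v* N) (x v* N)"
  by (simp only: matrix_vector_mul_assoc[symmetric] transpose_matrix_vector dot_lmul_matrix[symmetric])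

lemma frob_rows: "frob_sq ((P::real^'n^'r) ** (N::real^'m^'n)) = (\<Sum>i\<in>UNIV. inner (P$i) ((N ** transpose N) *v P$i))"
proof -
  have r: "(P ** N)$i = P$i v* N" for i
    by (simp add: vec_eq_iff matrix_matrix_mult_def vector_matrix_mult_def)
  show ?thesis by (simp add: frob_inner inner_vec_def[of "P ** N"] r quad_gram2)
qed

lemma inner_rows: "inner (P::real^'n^'r) P = (\<Sum>i\<in>UNIV. inner (P$i) (P$i))"
  by (simp add: inner_vec_def)

lemma quad_shift: "inner x ((X + c *\<^sub>R mat 1) *v x) = inner x (X *v x) + c * inner x (x::real^'n)"
  by (simp add: matrix_vector_mult_add_rdistrib inner_add_right smat_mv)

lemma gram_sym: "transpose ((N::real^'m^'n) ** transpose N) = N ** transpose N"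
  by (simp add: matrix_transpose_mul)

lemma gram_psd: "0 \<le> inner x (((N::real^'m^'n) ** transpose N) *v x)"
  by (simp add: quad_gram2)

lemma sym_quad_eq:
  fixes X Y :: "real^'n^'n"
  assumes "transpose X = X" "transpose Y = Y" "\<And>x. inner x (X *v x) = inner x (Y *v x)"
  shows "X = Y"
proof -
  define D where "D = X - Y"
  have sD: "transpose D = D" using assms by (simp add: D_def transpose_diff)
  have q: "inner x (D *v x) = 0" for x
    using assms(3)[of x] by (simp add: D_def matrix_vector_mult_diff_rdistrib inner_diff_right)
  have "D *v x = 0" for x
  proof -
    define y where "y = D *v x"
    have "inner (x + y) (D *v (x + y)) = 0" by (rule q)
    then have "inner x (D *v y) + inner y (D *v x) = 0"
      using q[of x] q[of y] by (simp add: matrix_vector_right_distrib inner_add_left inner_add_right)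
    moreover have "inner x (D *v y) = inner y (D *v x)"
      by (simp add: inner_mv_adj[of x D y] sD inner_commute)
    ultimately have "inner y y = 0" by (simp add: y_def)
    then show ?thesis by (simp add: y_def)
  qed
  then have "D = 0" by (simp add: matrix_eq)
  then show ?thesis by (simp add: D_def)
qed

definition penrose :: "real^'c^'r \<Rightarrow> real^'r^'c \<Rightarrow> bool" where
  "penrose A X \<longleftrightarrow> A ** X ** A = A \<and> X ** A ** X = X \<and>
                    transpose (A ** X) = A ** X \<and> transpose (X ** A) = X ** A"

lemma penrose_unique:
  assumes "penrose A X" "penrose A Y" shows "X = Y"
proof -
  have X1: "A ** X ** A = A" and X2: "X ** A ** X = X" and X3: "transpose (A ** X) = A ** X"
    and X4: "transpose (X ** A) = X ** A" using assms(1) by (auto simp: penrose_def)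
  have Y1: "A ** Y ** A = A" and Y2: "Y ** A ** Y = Y" and Y3: "transpose (A ** Y) = A ** Y"
    and Y4: "transpose (Y ** A) = Y ** A" using assms(2) by (auto simp: penrose_def)
  have tA1: "transpose A = transpose A ** (A ** Y)"
  proof -
    have "transpose A = transpose (A ** Y ** A)" using Y1 by simp
    also have "\<dots> = transpose A ** transpose (A ** Y)" by (simp only: matrix_transpose_mul)
    also have "\<dots> = transpose A ** (A ** Y)" using Y3 by simp
    finally show ?thesis .
  qed
  have tA2: "transpose A = (X ** A) ** transpose A"
  proof -
    have "transpose A = transpose (A ** (X ** A))" using X1 by (simp add: matrix_mul_assoc)
    also have "\<dots> = transpose (X ** A) ** transpose A" by (simp only: matrix_transpose_mul)
    also have "\<dots> = (X ** A) ** transpose A" using X4 by simp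
    finally show ?thesis .
  qed
  have "X = X ** (A ** X)" using X2 by (simp add: matrix_mul_assoc)
  also have "\<dots> = X ** transpose (A ** X)" using X3 by simp
  also have "\<dots> = X ** (transpose X ** transpose A)" by (simp only: matrix_transpose_mul)
  also have "\<dots> = X ** (transpose X ** (transpose A ** (A ** Y)))" using tA1 by simp
  also have "\<dots> = X ** (transpose (A ** X) ** (A ** Y))"
    by (simp only: matrix_mul_assoc matrix_transpose_mul)
  also have "\<dots> = X ** ((A ** X) ** (A ** Y))" using X3 by simp
  also have "\<dots> = (X ** A ** X) ** A ** Y" by (simp only: matrix_mul_assoc)
  also have "\<dots> = X ** A ** Y" using X2 by simp
  finally have eX: "X = X ** A ** Y" .
  have "Y = transpose (Y ** A) ** Y" using Y2 Y4 by simp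
  also have "\<dots> = (transpose A ** transpose Y) ** Y" by (simp only: matrix_transpose_mul)
  also have "\<dots> = (((X ** A) ** transpose A) ** transpose Y) ** Y" using tA2 by simp
  also have "\<dots> = (X ** A) ** transpose (Y ** A) ** Y"
    by (simp only: matrix_mul_assoc matrix_transpose_mul)
  also have "\<dots> = (X ** A) ** (Y ** A) ** Y" using Y4 by simp
  also have "\<dots> = X ** A ** (Y ** A ** Y)" by (simp only: matrix_mul_assoc)
  also have "\<dots> = X ** A ** Y" using Y2 by simp
  finally show ?thesis using eX by simp
qed

lemma pinv_eq: "penrose A X \<Longrightarrow> pinv A = X"
  unfolding pinv_def
  by (rule the_equality) (auto simp: penrose_def intro: penrose_unique[unfolded penrose_def])

lemma inv_pair: "invertible M \<Longrightarrow> M ** matrix_inv M = mat 1 \<and> matrix_inv M ** M = mat 1"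
  unfolding matrix_inv_def invertible_def by (rule someI_ex)

lemma pinv_inv:
  fixes M :: "real^'n^'n"
  assumes "M ** Mi = mat 1" "Mi ** M = mat 1"
  shows "pinv M = Mi"
  using assms by (intro pinv_eq) (simp add: penrose_def matrix_mul_assoc[symmetric])

lemma posdef_inv:
  fixes M :: "real^'n^'n"
  assumes c: "c > 0" and q: "\<And>x. c * inner x x \<le> inner x (M *v x)"
  obtains Mi where "M ** Mi = mat 1" "Mi ** M = mat 1"
proof -
  have "x = 0" if "M *v x = 0" for x
  proof -
    have "c * inner x x \<le> 0" using q[of x] that by simp
    then have "inner x x \<le> 0" using c by (simp add: mult_le_0_iff)
    then have "inner x x = 0" using inner_ge_zero[of x] by linarith
    then show ?thesis by simp
  qed
  then obtain Mi where "Mi ** M = mat 1" using matrix_left_invertible_ker by blast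
  then show ?thesis using that matrix_left_right_inverse by blast
qed

lemma inv_cmp:
  fixes X Y Xi Yi :: "real^'n^'n"
  assumes sX: "transpose X = X" and sY: "transpose Y = Y"
    and pX: "\<And>x. 0 \<le> inner x (X *v x)" and c: "c > 0"
    and le: "\<And>x. c * inner x (X *v x) \<le> inner x (Y *v x)"
    and Xi: "X ** Xi = mat 1" and Yi: "Y ** Yi = mat 1"
  shows "inner a (Yi *v a) \<le> (1/c) * inner a (Xi *v a)"
proof -
  define z where "z = Yi *v a"
  define w where "w = Xi *v a"
  have az: "Y *v z = a" using Yi by (simp add: z_def matrix_vector_mul_assoc)
  have aw: "X *v w = a" using Xi by (simp add: w_def matrix_vector_mul_assoc)
  have adjX: "inner u (X *v v) = inner v (X *v u)" for u v
    by (simp add: inner_mv_adj[of u X v] sX inner_commute)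
  have adjY: "inner u (Y *v v) = inner v (Y *v u)" for u v
    by (simp add: inner_mv_adj[of u Y v] sY inner_commute)
  define p where "p = inner z (X *v z)"
  define q where "q = inner z (Y *v z)"
  define r where "r = inner w (X *v w)"
  have t1: "inner a (Yi *v a) = q" unfolding q_def using adjY[of z z] az
    by (simp add: z_def[symmetric] inner_commute)
  have t2: "inner a (Xi *v a) = r" unfolding r_def using aw
    by (simp add: w_def[symmetric] inner_commute)
  have zw: "inner z (X *v w) = q" using aw az by (simp add: q_def)
  have wz: "inner w (X *v z) = q" using zw adjX[of z w] by simp
  have "0 \<le> inner (z - (1/c) *\<^sub>R w) (X *v (z - (1/c) *\<^sub>R w))" by (rule pX)
  also have "\<dots> = p - (1/c) * q - (1/c) * q + (1/c) * (1/c) * r"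
    by (simp add: matrix_vector_mult_diff_distrib matrix_vector_mult_scaleR inner_diff_left
        inner_diff_right zw wz p_def r_def algebra_simps)
  finally have h: "0 \<le> p - 2 * (1/c) * q + (1/c) * (1/c) * r" by simp
  have cp: "c * p \<le> q" using le[of z] by (simp add: p_def q_def)
  have "0 \<le> c * (p - 2 * (1/c) * q + (1/c) * (1/c) * r)" using h c by simp
  also have "\<dots> = c * p - 2 * q + (1/c) * r" using c by (simp add: field_simps)
  finally have "q \<le> (1/c) * r" using cp by linarith
  then show ?thesis using t1 t2 by simp
qed

lemma subspace_null: "subspace {x. (M::real^'n^'m) *v x = 0}"
  unfolding subspace_def
  by (auto simp: matrix_vector_right_distrib matrix_vector_mult_scaleR)

lemma pinv_exists_sym:
  fixes M :: "real^'n^'n"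
  assumes sM: "transpose M = M"
  shows "\<exists>X. penrose M X"
proof -
  obtain Bs where o: "onb Bs" and sp: "span Bs = {x. M *v x = 0}"
    using onb_of_subspace[OF subspace_null[of M]] by metis
  define Q where "Q = projm Bs"
  have sQ: "transpose Q = Q" by (simp add: Q_def projm_sym)
  have iQ: "Q ** Q = Q" using o by (simp add: Q_def projm_idem)
  have MQ: "M ** Q = 0"
  proof -
    have "(M ** Q) *v x = 0 *v x" for x
    proof -
      have "Q *v x \<in> span Bs" by (simp add: Q_def projm_span)
      then show ?thesis using sp by (simp add: matrix_vector_mul_assoc[symmetric])
    qed
    then show ?thesis using matrix_eq[of "M ** Q" 0] by blast
  qed
  have QM: "Q ** M = 0"
  proof -
    have "Q ** M = transpose (M ** Q)" by (simp add: matrix_transpose_mul sQ sM)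
    then show ?thesis by (simp add: MQ transpose_def vec_eq_iff)
  qed
  have Qfix: "Q *v x = x" if "M *v x = 0" for x
    using o sp that by (simp add: Q_def onb_expand)
  define N where "N = M + Q"
  have "x = 0" if "N *v x = 0" for x
  proof -
    have e: "M *v x + Q *v x = 0" using that by (simp add: N_def matrix_vector_mult_add_rdistrib)
    have "inner (Q *v x) (M *v x) = inner (transpose M *v (Q *v x)) x" by (rule inner_mv_adj)
    also have "\<dots> = 0" by (simp add: sM matrix_vector_mul_assoc MQ)
    finally have z1: "inner (Q *v x) (M *v x) = 0" .
    have "M *v x = - (Q *v x)" using e by (simp add: eq_neg_iff_add_eq_0)
    then have "inner (Q *v x) (Q *v x) = 0" using z1 by simp
    then have "Q *v x = 0" by simp
    then have "M *v x = 0" using e by simp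
    then show ?thesis using Qfix[of x] \<open>Q *v x = 0\<close> by simp
  qed
  then obtain Ni where NiN: "Ni ** N = mat 1" using matrix_left_invertible_ker by blast
  then have NNi: "N ** Ni = mat 1" using matrix_left_right_inverse by blast
  have NQ: "N ** Q = Q" by (simp add: N_def mat_add_rdistrib MQ iQ)
  have QN: "Q ** N = Q" by (simp add: N_def matrix_add_ldistrib QM iQ)
  have NiQ: "Ni ** Q = Q"
  proof -
    have "Ni ** Q = Ni ** (N ** Q)" by (simp add: NQ)
    also have "\<dots> = Q" by (simp add: matrix_mul_assoc NiN)
    finally show ?thesis .
  qed
  have QNi: "Q ** Ni = Q"
  proof -
    have "Q ** Ni = (Q ** N) ** Ni" by (simp add: QN)
    also have "\<dots> = Q" by (simp add: matrix_mul_assoc[symmetric] NNi)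
    finally show ?thesis .
  qed
  define X where "X = Ni - Q"
  have MN: "M = N - Q" by (simp add: N_def)
  have MX: "M ** X = mat 1 - Q"
    by (simp add: MN X_def mat_diff_ldistrib mat_diff_rdistrib NNi NQ QNi iQ)
  have XM: "X ** M = mat 1 - Q"
    by (simp add: MN X_def mat_diff_ldistrib mat_diff_rdistrib NiN NiQ QN iQ)
  have sIQ: "transpose (mat 1 - Q) = mat 1 - Q" by (simp add: transpose_diff sQ)
  have "M ** X ** M = M" by (simp add: MX mat_diff_rdistrib QM)
  moreover have "X ** M ** X = X"
  proof -
    have QX: "Q ** X = 0" by (simp add: X_def mat_diff_ldistrib QNi iQ)
    have "X ** M ** X = (mat 1 - Q) ** X" by (simp only: XM)
    also have "\<dots> = X" by (simp add: mat_diff_rdistrib QX)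
    finally show ?thesis .
  qed
  ultimately have "penrose M X" using MX XM sIQ by (simp add: penrose_def)
  then show ?thesis ..
qed

lemma pinv_nonneg:
  fixes M :: "real^'n^'n"
  assumes sM: "transpose M = M" and pM: "\<And>x. 0 \<le> inner x (M *v x)"
  shows "0 \<le> inner a (pinv M *v a)"
proof -
  obtain X where pX: "penrose M X" using pinv_exists_sym[OF sM] by blast
  then have X1: "M ** X ** M = M" and X2: "X ** M ** X = X" and X3: "transpose (M ** X) = M ** X"
    and X4: "transpose (X ** M) = X ** M" by (auto simp: penrose_def)
  have "penrose M (transpose X)"
    unfolding penrose_def
  proof (intro conjI)
    have "M ** transpose X ** M = transpose (M ** X ** M)"
      by (simp add: matrix_transpose_mul sM matrix_mul_assoc)
    then show "M ** transpose X ** M = M" using X1 sM by simp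
    have "transpose X ** M ** transpose X = transpose (X ** M ** X)"
      by (simp add: matrix_transpose_mul sM matrix_mul_assoc)
    then show "transpose X ** M ** transpose X = transpose X" using X2 by simp
    have e1: "M ** transpose X = X ** M"
      using X4 by (simp add: matrix_transpose_mul sM)
    show "transpose (M ** transpose X) = M ** transpose X"
      using X4 by (simp add: e1)
    have e2: "transpose X ** M = M ** X"
      using X3 by (simp add: matrix_transpose_mul sM)
    show "transpose (transpose X ** M) = transpose X ** M"
      using X3 by (simp add: e2)
  qed
  then have sX: "transpose X = X" using penrose_unique[OF _ pX] by blast
  have "pinv M = X" using pinv_eq[OF pX] .
  moreover have "X *v (M *v (X *v a)) = (X ** M ** X) *v a"
    by (simp add: matrix_vector_mul_assoc matrix_mul_assoc)
  ultimately have "inner a (pinv M *v a) = inner a (X *v (M *v (X *v a)))"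
    using X2 by simp
  also have "\<dots> = inner (X *v a) (M *v (X *v a))"
    by (simp add: inner_mv_adj[of a X] sX)
  also have "\<dots> \<ge> 0" by (rule pM)
  finally show ?thesis .
qed
lemma transpose_smat: "transpose (c *\<^sub>R (mat 1::real^'n^'n)) = c *\<^sub>R mat 1"
  by (simp add: transpose_def mat_def vec_eq_iff)

lemma fin_ineq:
  fixes r s t1 t2 :: real
  assumes "r = t1" "s = t2" "t2 \<le> 2 * t1" "t1 \<le> 2 * t2"
  shows "(1/2) * r \<le> s \<and> s \<le> 2 * r"
  using assms by linarith

lemma fin_eq:
  fixes r s t1 t2 :: real
  assumes "r = t1" "s = t2" "t2 = t1" "0 \<le> t1"
  shows "(1/2) * r \<le> s \<and> s \<le> 2 * r"
  using assms by linarith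

theorem mainTheorem11:
  fixes A :: "real^'d^'n" and B :: "real^'m^'n" and k :: nat
  assumes "k \<ge> 1"
    and "loewner_le (B ** transpose B) (A ** transpose A)"
    and "loewner_le (A ** transpose A)
           (B ** transpose B + ((1/2) * (frob_sq (A - best_rank k A) / real k)) *\<^sub>R mat 1)"
  shows "\<forall>i. (1/2) * ridge_lev k A i \<le>
               column i A \<bullet> (pinv (B ** transpose B +
                  ((frob_sq A - frob_sq (best_rank k B)) / real k) *\<^sub>R mat 1) *v column i A)
          \<and> column i A \<bullet> (pinv (B ** transpose B +
                  ((frob_sq A - frob_sq (best_rank k B)) / real k) *\<^sub>R mat 1) *v column i A)
              \<le> 2 * ridge_lev k A i"
proof -
  define lam where "lam = frob_sq (A - best_rank k A) / real k"
  define lam' where "lam' = (frob_sq A - frob_sq (best_rank k B)) / real k"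
  define GA where "GA = A ** transpose A"
  define GB where "GB = B ** transpose B"
  have kpos: "real k > 0" using assms(1) by simp
  have lam0: "lam \<ge> 0" unfolding lam_def by (simp add: frob_inner)
  have h1: "\<And>x. inner x (GB *v x) \<le> inner x (GA *v x)"
    using assms(2) by (simp add: loewner_le_def GA_def GB_def)
  have h2: "\<And>x. inner x (GA *v x) \<le> inner x (GB *v x) + (lam/2) * inner x x"
  proof -
    fix x :: "real^'n"
    have "(1/2) * (frob_sq (A - best_rank k A) / real k) = lam/2" by (simp add: lam_def)
    then show "inner x (GA *v x) \<le> inner x (GB *v x) + (lam/2) * inner x x"
      using assms(3) by (simp add: loewner_le_def GA_def GB_def quad_shift)
  qed
  have pA: "\<And>x. 0 \<le> inner x (GA *v x)" unfolding GA_def by (rule gram_psd)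
  have pB: "\<And>x. 0 \<le> inner x (GB *v x)" unfolding GB_def by (rule gram_psd)
  obtain PA where PA: "PA \<in> Kset k" "frob_sq (best_rank k A) = frob_sq (PA ** A)"
      "frob_sq (A - best_rank k A) = frob_sq A - frob_sq (PA ** A)"
    using Gchar(1)[of k A] by blast
  obtain PB where PB: "PB \<in> Kset k" "frob_sq (best_rank k B) = frob_sq (PB ** B)"
      "frob_sq (B - best_rank k B) = frob_sq B - frob_sq (PB ** B)"
    using Gchar(1)[of k B] by blast
  have maxA: "\<And>P. P \<in> Kset k \<Longrightarrow> frob_sq (P ** A) \<le> frob_sq A - frob_sq (A - best_rank k A)"
    using Gchar(2)[of k A] by blast
  have klam: "real k * lam = frob_sq (A - best_rank k A)" using kpos by (simp add: lam_def)
  have klam': "real k * lam' = frob_sq A - frob_sq (best_rank k B)" using kpos by (simp add: lam'_def)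
  have i1: "frob_sq (best_rank k B) \<le> frob_sq A - real k * lam"
  proof -
    have "frob_sq (best_rank k B) = (\<Sum>i\<in>UNIV. inner (PB$i) (GB *v PB$i))"
      using PB(2) by (simp add: frob_rows GB_def)
    also have "\<dots> \<le> (\<Sum>i\<in>UNIV. inner (PB$i) (GA *v PB$i))" by (intro sum_mono h1)
    also have "\<dots> = frob_sq (PB ** A)" by (simp add: frob_rows GA_def)
    also have "\<dots> \<le> frob_sq A - real k * lam" using maxA[OF PB(1)] klam by simp
    finally show ?thesis .
  qed
  have i2: "frob_sq A - real k * lam \<le> frob_sq (best_rank k B) + (lam/2) * real k"
  proof -
    have trPA: "inner PA PA \<le> real k" using PA(1) frob_proj[of PA] by (auto simp: Kset_def)
    have "frob_sq A - real k * lam = frob_sq (PA ** A)" using PA(3) klam by simp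
    also have "\<dots> = (\<Sum>i\<in>UNIV. inner (PA$i) (GA *v PA$i))" by (simp add: frob_rows GA_def)
    also have "\<dots> \<le> (\<Sum>i\<in>UNIV. inner (PA$i) (GB *v PA$i) + (lam/2) * inner (PA$i) (PA$i))"
      by (intro sum_mono h2)
    also have "\<dots> = frob_sq (PA ** B) + (lam/2) * inner PA PA"
    proof -
      have "(\<Sum>i\<in>UNIV. (lam/2) * inner (PA$i) (PA$i)) = (lam/2) * inner PA PA"
        by (simp only: inner_rows[of PA] sum_distrib_left)
      then show ?thesis by (simp only: sum.distrib frob_rows GB_def)
    qed
    also have "\<dots> \<le> frob_sq (best_rank k B) + (lam/2) * real k"
    proof -
      have "frob_sq (PA ** B) \<le> frob_sq (best_rank k B)"
        using Gchar(2)[of k B] PA(1) PB(2,3) by auto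
      moreover have "(lam/2) * inner PA PA \<le> (lam/2) * real k"
        using trPA lam0 by (intro mult_left_mono) auto
      ultimately show ?thesis by linarith
    qed
    finally show ?thesis .
  qed
  have lo: "lam \<le> lam'"
  proof -
    have "real k * lam \<le> real k * lam'" using i1 klam' by linarith
    then show ?thesis using kpos by simp
  qed
  have hi: "lam' \<le> 3/2 * lam"
  proof -
    have "real k * lam' \<le> real k * (3/2 * lam)" using i2 klam' by (simp add: algebra_simps)
    then show ?thesis using kpos by simp
  qed
  define XA where "XA = GA + lam *\<^sub>R mat 1"
  define YB where "YB = GB + lam' *\<^sub>R mat 1"
  have sXA: "transpose XA = XA"
    by (simp add: XA_def GA_def transpose_add gram_sym transpose_smat)
  have sYB: "transpose YB = YB"
    by (simp add: YB_def GB_def transpose_add gram_sym transpose_smat)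
  have qX: "\<And>x. inner x (XA *v x) = inner x (GA *v x) + lam * inner x x"
    by (simp add: XA_def quad_shift)
  have qY: "\<And>x. inner x (YB *v x) = inner x (GB *v x) + lam' * inner x x"
    by (simp add: YB_def quad_shift)
  have pXA: "\<And>x. 0 \<le> inner x (XA *v x)"
    using qX pA lam0 by (simp add: add_nonneg_nonneg)
  have pYB: "\<And>x. 0 \<le> inner x (YB *v x)"
    using qY pB lam0 lo by (simp add: add_nonneg_nonneg)
  have rl: "ridge_lev k A i = inner (column i A) (pinv XA *v column i A)" for i
    by (simp add: ridge_lev_def XA_def GA_def lam_def)
  have tl: "column i A \<bullet> (pinv (B ** transpose B +
                  ((frob_sq A - frob_sq (best_rank k B)) / real k) *\<^sub>R mat 1) *v column i A)
          = inner (column i A) (pinv YB *v column i A)" for i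
    by (simp add: YB_def GB_def lam'_def)
  show ?thesis
  proof (intro allI)
    fix i
    let ?a = "column i A"
    show "(1/2) * ridge_lev k A i \<le>
               column i A \<bullet> (pinv (B ** transpose B +
                  ((frob_sq A - frob_sq (best_rank k B)) / real k) *\<^sub>R mat 1) *v column i A)
          \<and> column i A \<bullet> (pinv (B ** transpose B +
                  ((frob_sq A - frob_sq (best_rank k B)) / real k) *\<^sub>R mat 1) *v column i A)
              \<le> 2 * ridge_lev k A i"
    proof (cases "lam = 0")
      case True
      then have "lam' = 0" using lo hi by linarith
      have qe: "inner x (GA *v x) = inner x (GB *v x)" for x
      proof -
        have "inner x (GA *v x) \<le> inner x (GB *v x)" using h2[of x] True by simp
        then show ?thesis using h1[of x] by linarith
      qed
      have sGA: "transpose GA = GA" by (simp add: GA_def gram_sym)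
      have sGB: "transpose GB = GB" by (simp add: GB_def gram_sym)
      have "GA = GB" by (rule sym_quad_eq[OF sGA sGB qe])
      then have "YB = XA" using True \<open>lam' = 0\<close> by (simp add: XA_def YB_def)
      moreover have "0 \<le> inner ?a (pinv XA *v ?a)" by (rule pinv_nonneg[OF sXA pXA])
      ultimately have e2: "inner ?a (pinv YB *v ?a) = inner ?a (pinv XA *v ?a)" by (simp only:)
      have e1: "0 \<le> inner ?a (pinv XA *v ?a)" by (rule pinv_nonneg[OF sXA pXA])
      show ?thesis by (rule fin_eq[OF rl[of i] tl[of i] e2 e1])
    next
      case False
      then have lpos: "lam > 0" using lam0 by simp
      have qXl: "lam * inner x x \<le> inner x (XA *v x)" for x
        using qX[of x] pA[of x] by linarith
      obtain Xi where Xi: "XA ** Xi = mat 1" "Xi ** XA = mat 1"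
        using posdef_inv[OF lpos qXl] by blast
      have qYl: "(lam/2) * inner x x \<le> inner x (YB *v x)" for x
      proof -
        have "lam * inner x x \<le> lam' * inner x x" using lo by (intro mult_right_mono) auto
        then show ?thesis using qY[of x] h2[of x] pA[of x] by linarith
      qed
      have l2: "lam/2 > 0" using lpos by simp
      obtain Yi where Yi: "YB ** Yi = mat 1" "Yi ** YB = mat 1"
        using posdef_inv[OF l2 qYl] by blast
      have pX: "pinv XA = Xi" using pinv_inv[OF Xi] .
      have pY: "pinv YB = Yi" using pinv_inv[OF Yi] .
      have c1: "(1/2) * inner x (XA *v x) \<le> inner x (YB *v x)" for x
      proof -
        have "lam * inner x x \<le> lam' * inner x x" using lo by (intro mult_right_mono) auto
        then show ?thesis using qY[of x] qX[of x] h2[of x] pA[of x] by linarith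
      qed
      have c2: "(1/2) * inner x (YB *v x) \<le> inner x (XA *v x)" for x
      proof -
        have "lam' * inner x x \<le> (3/2 * lam) * inner x x" using hi by (intro mult_right_mono) auto
        moreover have "0 \<le> lam * inner x x" using lam0 by simp
        ultimately show ?thesis using qY[of x] qX[of x] h1[of x] pA[of x] by linarith
      qed
      have "inner ?a (Yi *v ?a) \<le> (1/(1/2)) * inner ?a (Xi *v ?a)"
        by (rule inv_cmp[OF sXA sYB pXA _ c1 Xi(1) Yi(1)]) simp
      moreover have "inner ?a (Xi *v ?a) \<le> (1/(1/2)) * inner ?a (Yi *v ?a)"
        by (rule inv_cmp[OF sYB sXA pYB _ c2 Yi(1) Xi(1)]) simp
      ultimately have "inner ?a (pinv YB *v ?a) \<le> 2 * inner ?a (pinv XA *v ?a)"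
         "inner ?a (pinv XA *v ?a) \<le> 2 * inner ?a (pinv YB *v ?a)" using pX pY by simp_all
      then show ?thesis by (intro fin_ineq[OF rl[of i] tl[of i]])
    qed
  qed
qed

end
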